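(* Let $\Lambda$ be a lattice of rank $n$, $U=\Lambda\otimes\mathbb{R}$, and let $X\subset\Lambda$ be a basis of $U$. Then $$M_X(x,1)=\sum_{k=0}^n\Big(\sum_{A\subseteq X,\ |A|=n-k}h(A)\Big)x^k.$$
   Context: For a list $Y$, $\mathcal{Z}(Y)=\{\sum_{y\in Y}t_y y: 0\le t_y\le 1\}$; for $A\subseteq X$, $\mathcal{Z}(A)$ is a face of the parallelepiped $\mathcal{Z}(X)$. A point $p\in\Lambda\cap\mathcal{Z}(X)$ is internal to a face $F$ if $F$ is the smallest face of $\mathcal{Z}(X)$ containing $p$, and $h(A)$ is the number of points of $\Lambda$ internal to $\mathcal{Z}(A)$. For $A\subseteq X$: $r(A)=\dim_{\mathbb{R}}\langle A\rangle_{\mathbb{R}}$, $m(A)=[\Lambda\cap\langle A\rangle_{\mathbb{R}}:\langle A\rangle_{\mathbb{Z}}]$, and $M_X(x,y)=\sum_{A\subseteq X} m(A)(x-1)^{r(X)-r(A)}(y-1)^{|A|-r(A)}$. *)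

theory Defs
  imports "HOL-Analysis.Analysis"
begin

definition zspan :: "('a::real_vector) set \<Rightarrow> 'a set" where
  "zspan A = {(\<Sum>a\<in>A. of_int (c a) *\<^sub>R a) | c. True}"

text \<open>A lattice of full rank in the real vector space real^'n, i.e. the integer span
  of a basis; its rank is CARD('n) and real^'n plays the role of U.\<close>
definition full_lattice :: "(real^'n) set \<Rightarrow> bool" where
  "full_lattice L \<longleftrightarrow> (\<exists>B. finite B \<and> independent B \<and> span B = UNIV \<and> L = zspan B)"

definition zonotope :: "('a::real_vector) set \<Rightarrow> 'a set" where
  "zonotope A = {(\<Sum>y\<in>A. t y *\<^sub>R y) | t. \<forall>y\<in>A. 0 \<le> t y \<and> t y \<le> 1}"

definition internal_to :: "('a::euclidean_space) set \<Rightarrow> 'a \<Rightarrow> 'a set \<Rightarrow> bool" where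
  "internal_to X p F \<longleftrightarrow> F face_of zonotope X \<and> p \<in> F \<and>
      (\<forall>G. G face_of zonotope X \<and> p \<in> G \<longrightarrow> F \<subseteq> G)"

definition hcount :: "('a::euclidean_space) set \<Rightarrow> 'a set \<Rightarrow> 'a set \<Rightarrow> nat" where
  "hcount L X A = card {p \<in> L \<inter> zonotope X. internal_to X p (zonotope A)}"

definition mult :: "('a::real_vector) set \<Rightarrow> 'a set \<Rightarrow> nat" where
  "mult L A = card ((\<lambda>v. (\<lambda>w. v + w) ` zspan A) ` (L \<inter> span A))"

definition arith_tutte :: "('a::euclidean_space) set \<Rightarrow> 'a set \<Rightarrow> real \<Rightarrow> real \<Rightarrow> real" where
  "arith_tutte L X x y = (\<Sum>A\<in>Pow X. real (mult L A) * (x - 1) ^ (dim X - dim A)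
        * (y - 1) ^ (card A - dim A))"

end

theory Submission
  imports Defs
begin

lemma seg_alg: "u*(1+d) = (1::real) \<Longrightarrow> (1-u)*a + u*(b + d*(b-a)) = b"
proof -
  assume h: "u*(1+d) = 1"
  have "(1-u)*a + u*(b+d*(b-a)) = a + (u*(1+d))*(b-a)" by (simp add: algebra_simps)
  then show ?thesis using h by simp
qed

lemma supp_lem: "\<forall>y\<in>X. (y \<in> C \<longrightarrow> 0 < f y \<and> f y < 1) \<and> (y \<notin> C \<longrightarrow> f y = 0) \<Longrightarrow> \<forall>y\<in>X. (y\<in>C \<longleftrightarrow> f y \<noteq> (0::real))"
  by fastforce

lemma bnd_lem: "\<forall>y\<in>X. (y \<in> C \<longrightarrow> 0 \<le> f y \<and> f y < 1) \<and> (y \<notin> C \<longrightarrow> f y = 0) \<Longrightarrow> \<forall>y\<in>X. 0 \<le> f y \<and> f y \<le> (1::real)"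
  by fastforce
lemma bnd_lem2: "\<forall>y\<in>X. (y \<in> C \<longrightarrow> 0 < f y \<and> f y < 1) \<and> (y \<notin> C \<longrightarrow> f y = 0) \<Longrightarrow> \<forall>y\<in>X. 0 \<le> f y \<and> f y \<le> (1::real)"
  by fastforce

lemma supp2: "\<forall>y\<in>X. (y\<in>A \<longrightarrow> 0 \<le> f y \<and> f y < 1) \<and> (y\<notin>A \<longrightarrow> f y = 0) \<Longrightarrow> \<forall>y\<in>X. (y \<in> {y\<in>A. f y \<noteq> 0} \<longrightarrow> 0 < f y \<and> f y < 1) \<and> (y \<notin> {y\<in>A. f y \<noteq> 0} \<longrightarrow> f y = (0::real))"
proof (intro ballI conjI impI)
  fix y assume H: "\<forall>y\<in>X. (y\<in>A \<longrightarrow> 0 \<le> f y \<and> f y < 1) \<and> (y\<notin>A \<longrightarrow> f y = 0)" and y: "y \<in> X"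
  { assume "y \<in> {y\<in>A. f y \<noteq> 0}" then show "0 < f y" "f y < 1" using H y by force+ }
  { assume "y \<notin> {y\<in>A. f y \<noteq> 0}" then show "f y = 0" using H y by force }
qed
lemma supp3: "C \<subseteq> A \<Longrightarrow> \<forall>y\<in>X. (y \<in> C \<longrightarrow> 0 < f y \<and> f y < 1) \<and> (y\<notin>C \<longrightarrow> f y = 0) \<Longrightarrow> \<forall>y\<in>X. (y\<in>A \<longrightarrow> 0 \<le> f y \<and> f y < 1) \<and> (y\<notin>A \<longrightarrow> f y = (0::real))"
proof (intro ballI conjI impI)
  fix y assume C: "C \<subseteq> A" and H: "\<forall>y\<in>X. (y \<in> C \<longrightarrow> 0 < f y \<and> f y < 1) \<and> (y\<notin>C \<longrightarrow> f y = 0)" and y: "y \<in> X"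
  have h: "(y \<in> C \<longrightarrow> 0 < f y \<and> f y < 1) \<and> (y\<notin>C \<longrightarrow> f y = 0)" using H y by blast
  { assume "y \<in> A" then show "0 \<le> f y" "f y < 1" using h by (cases "y \<in> C"; simp)+ }
  { assume "y \<notin> A" then show "f y = 0" using h C by auto }
qed

lemma zspan_add: "u \<in> zspan A \<Longrightarrow> v \<in> zspan A \<Longrightarrow> u + v \<in> zspan A"
proof -
  assume "u \<in> zspan A" "v \<in> zspan A"
  then obtain c d where "u = (\<Sum>a\<in>A. of_int (c a) *\<^sub>R a)" "v = (\<Sum>a\<in>A. of_int (d a) *\<^sub>R a)"
    unfolding zspan_def by blast
  then have "u + v = (\<Sum>a\<in>A. of_int (c a + d a) *\<^sub>R a)"
    by (simp add: sum.distrib scaleR_add_left)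
  then show ?thesis unfolding zspan_def by (intro CollectI exI[of _ "\<lambda>a. c a + d a"]) simp
qed

lemma zspan_diff: "u \<in> zspan A \<Longrightarrow> v \<in> zspan A \<Longrightarrow> u - v \<in> zspan A"
proof -
  assume "u \<in> zspan A" "v \<in> zspan A"
  then obtain c d where "u = (\<Sum>a\<in>A. of_int (c a) *\<^sub>R a)" "v = (\<Sum>a\<in>A. of_int (d a) *\<^sub>R a)"
    unfolding zspan_def by blast
  then have "u - v = (\<Sum>a\<in>A. of_int (c a - d a) *\<^sub>R a)"
    by (simp add: sum_subtractf scaleR_diff_left)
  then show ?thesis unfolding zspan_def by (intro CollectI exI[of _ "\<lambda>a. c a - d a"]) simp
qed

lemma zspan_zero: "0 \<in> zspan A"
  unfolding zspan_def by (rule CollectI, rule exI[of _ "\<lambda>_. 0"]) simp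

lemma coset_shift:
  assumes w: "w \<in> zspan A"
  shows "(\<lambda>z. (v - w) + z) ` zspan A = (\<lambda>z. v + z) ` zspan A"
proof
  show "(\<lambda>z. (v - w) + z) ` zspan A \<subseteq> (\<lambda>z. v + z) ` zspan A"
  proof
    fix x assume "x \<in> (\<lambda>z. (v - w) + z) ` zspan A"
    then obtain z where z: "z \<in> zspan A" "x = v - w + z" by blast
    then have "x = v + (z - w)" by simp
    moreover have "z - w \<in> zspan A" using zspan_diff[OF z(1) w] .
    ultimately show "x \<in> (\<lambda>z. v + z) ` zspan A" by blast
  qed
  show "(\<lambda>z. v + z) ` zspan A \<subseteq> (\<lambda>z. (v - w) + z) ` zspan A"
  proof
    fix x assume "x \<in> (\<lambda>z. v + z) ` zspan A"
    then obtain z where z: "z \<in> zspan A" "x = v + z" by blast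
    then have "x = (v - w) + (z + w)" by simp
    moreover have "z + w \<in> zspan A" using zspan_add[OF z(1) w] .
    ultimately show "x \<in> (\<lambda>z. (v - w) + z) ` zspan A" by blast
  qed
qed

lemma int_small: "\<bar>real_of_int k\<bar> < 1 \<Longrightarrow> k = 0"
  by linarith

lemma a1: "0\<le>(u::real) \<Longrightarrow> 0\<le>w \<Longrightarrow> u+w=1 \<Longrightarrow> 0\<le>a \<Longrightarrow> a\<le>1 \<Longrightarrow> 0\<le>b\<Longrightarrow>b\<le>1 \<Longrightarrow> 0 \<le> u*a+w*b \<and> u*a+w*b \<le> 1"
  by (smt (verit, ccfv_SIG) mult_cancel_right1 mult_left_le
    ordered_comm_semiring_class.comm_mult_left_mono)
lemma a2: "0<(u::real) \<Longrightarrow> u<1 \<Longrightarrow> 0\<le>p \<Longrightarrow> p\<le>1 \<Longrightarrow> 0\<le>q\<Longrightarrow>q\<le>1 \<Longrightarrow> (1-u)*p+u*q = 0 \<Longrightarrow> p = 0 \<and> q = 0"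
  by (smt (verit, best) mult_eq_0_iff zero_le_mult_iff)
lemma a3: "0<(u::real) \<Longrightarrow> u<1 \<Longrightarrow> 0\<le>p \<Longrightarrow> p\<le>1 \<Longrightarrow> 0\<le>q\<Longrightarrow>q\<le>1 \<Longrightarrow> (1-u)*p+u*q = 1 \<Longrightarrow> p = 1 \<and> q = 1"
  by (smt (verit, ccfv_threshold) mult_le_cancel_left1 mult_le_cancel_left2)

context
  fixes X :: "('a::euclidean_space) set"
  assumes indX: "independent X" and spX: "span X = UNIV"
begin

lemma finX: "finite X"
  using indX finiteI_independent by blast

lemma rep_sumX: "(\<Sum>y\<in>X. representation X v y *\<^sub>R y) = v"
  using sum_representation_eq[OF indX _ finX] spX by auto

lemma rep_comb:
  assumes "A \<subseteq> X"
  shows "representation X (\<Sum>z\<in>A. f z *\<^sub>R z) y = (if y \<in> A then f y else 0)"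
proof -
  have "representation X (\<Sum>z\<in>A. f z *\<^sub>R z) y = (\<Sum>z\<in>A. representation X (f z *\<^sub>R z) y)"
    by (subst representation_sum[OF indX]) (auto simp: spX)
  also have "\<dots> = (\<Sum>z\<in>A. f z * (if y = z then 1 else 0))"
    using assms by (intro sum.cong refl) (auto simp: representation_scale[OF indX] spX representation_basis[OF indX])
  also have "\<dots> = (if y \<in> A then f y else 0)"
    using finite_subset[OF assms finX] by (simp add: if_distrib sum.delta cong: if_cong)
  finally show ?thesis .
qed

lemma rep_add: "representation X (u + v) y = representation X u y + representation X v y"
  by (simp add: representation_add[OF indX] spX)
lemma rep_diff: "representation X (u - v) y = representation X u y - representation X v y"
  by (simp add: representation_diff[OF indX] spX)
lemma rep_scale: "representation X (r *\<^sub>R u) y = r * representation X u y"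
  by (simp add: representation_scale[OF indX] spX)
lemma rep_zero: "representation X 0 y = 0"
  by (simp add: representation_zero)
lemma rep_outside: "y \<notin> X \<Longrightarrow> representation X v y = 0"
  using representation_ne_zero by blast

lemma rep_eqI: "(\<And>y. y \<in> X \<Longrightarrow> representation X u y = representation X v y) \<Longrightarrow> u = v"
  by (metis (no_types, lifting) rep_sumX sum.cong)

lemma zon_char:
  assumes "A \<subseteq> X"
  shows "zonotope A = {v. \<forall>y\<in>X. (y \<in> A \<longrightarrow> 0 \<le> representation X v y \<and> representation X v y \<le> 1)
            \<and> (y \<notin> A \<longrightarrow> representation X v y = 0)}" (is "_ = ?R")
proof
  show "zonotope A \<subseteq> ?R"
  proof
    fix v assume "v \<in> zonotope A"
    then obtain t where v: "v = (\<Sum>y\<in>A. t y *\<^sub>R y)" and t: "\<forall>y\<in>A. 0 \<le> t y \<and> t y \<le> 1"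
      unfolding zonotope_def by blast
    show "v \<in> ?R" using t by (auto simp: v rep_comb[OF assms])
  qed
next
  show "?R \<subseteq> zonotope A"
  proof
    fix v assume v: "v \<in> ?R"
    have "v = (\<Sum>y\<in>X. representation X v y *\<^sub>R y)" using rep_sumX by simp
    also have "\<dots> = (\<Sum>y\<in>A. representation X v y *\<^sub>R y)"
      using v assms finX by (intro sum.mono_neutral_right) auto
    finally show "v \<in> zonotope A" unfolding zonotope_def using v assms by blast
  qed
qed

lemma span_char:
  assumes "A \<subseteq> X"
  shows "span A = {v. \<forall>y\<in>X - A. representation X v y = 0}" (is "_ = ?R")
proof
  show "span A \<subseteq> ?R"
  proof
    fix v assume "v \<in> span A"
    then have "representation X v = representation A v"
      using representation_extend[OF indX _ assms] by blast
    then show "v \<in> ?R" using representation_ne_zero[of A v] by auto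
  qed
next
  show "?R \<subseteq> span A"
  proof
    fix v assume v: "v \<in> ?R"
    have "v = (\<Sum>y\<in>X. representation X v y *\<^sub>R y)" using rep_sumX by simp
    also have "\<dots> = (\<Sum>y\<in>A. representation X v y *\<^sub>R y)"
      using v assms finX by (intro sum.mono_neutral_right) auto
    also have "\<dots> \<in> span A" by (intro span_sum span_scale span_base)
    finally show "v \<in> span A" .
  qed
qed

lemma zonX: "v \<in> zonotope X \<longleftrightarrow> (\<forall>y\<in>X. 0 \<le> representation X v y \<and> representation X v y \<le> 1)"
  using zon_char[of X] by auto

lemma face_coord:
  assumes "S \<subseteq> X" and c: "\<forall>y\<in>S. c y = 0 \<or> c y = 1"
  shows "{v \<in> zonotope X. \<forall>y\<in>S. representation X v y = c y} face_of zonotope X"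
proof -
  let ?T = "{v \<in> zonotope X. \<forall>y\<in>S. representation X v y = c y}"
  have cv: "convex ?T"
    unfolding convex_def
  proof (intro ballI allI impI)
    fix a b and u w :: real
    assume a: "a \<in> ?T" and b: "b \<in> ?T"
      and uw: "0 \<le> u" "0 \<le> w" "u + w = 1"
    have "\<forall>y\<in>X. 0 \<le> representation X (u *\<^sub>R a + w *\<^sub>R b) y \<and> representation X (u *\<^sub>R a + w *\<^sub>R b) y \<le> 1"
      using a b uw a1[OF uw] by (simp add: rep_add rep_scale zonX)
    moreover have "\<forall>y\<in>S. representation X (u *\<^sub>R a + w *\<^sub>R b) y = c y"
      using a b uw by (auto simp: rep_add rep_scale distrib_right[symmetric])
    ultimately show "u *\<^sub>R a + w *\<^sub>R b \<in> ?T"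
      by (simp add: zonX)
  qed
  have fc: "a \<in> ?T \<and> b \<in> ?T" if a: "a \<in> zonotope X" and b: "b \<in> zonotope X"
      and x: "x \<in> ?T" and seg: "x \<in> open_segment a b" for a b x
  proof -
    obtain u where u: "0 < u" "u < 1" "x = (1 - u) *\<^sub>R a + u *\<^sub>R b"
      using seg by (auto simp: in_segment)
    have "representation X a y = c y \<and> representation X b y = c y" if y: "y \<in> S" for y
    proof -
      have e: "(1-u) * representation X a y + u * representation X b y = c y"
        using x y u by (auto simp: rep_add rep_scale)
      have yX: "y \<in> X" using y assms by auto
      have r: "0 \<le> representation X a y" "representation X a y \<le> 1"
         "0 \<le> representation X b y" "representation X b y \<le> 1"
        using a b yX by (auto simp: zonX)
      show ?thesis
      proof (cases "c y = 0")
        case True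
        then show ?thesis using a2[OF u(1,2) r] e by auto
      next
        case False
        then have "c y = 1" using c y by auto
        then show ?thesis using a3[OF u(1,2) r] e by auto
      qed
    qed
    then show ?thesis using a b by auto
  qed
  show ?thesis unfolding face_of_def using cv fc by blast
qed

lemma zon_eq_face: "A \<subseteq> X \<Longrightarrow> zonotope A = {v \<in> zonotope X. \<forall>y\<in>X - A. representation X v y = (\<lambda>_. 0) y}"
  by (auto simp: zon_char zonX)

lemma zon_face: "A \<subseteq> X \<Longrightarrow> zonotope A face_of zonotope X"
  by (subst zon_eq_face) (auto intro!: face_coord)

lemma zon_sub: "A \<subseteq> X \<Longrightarrow> zonotope A \<subseteq> zonotope X"
  using zon_face face_of_imp_subset by blast

lemma internal_char:
  assumes AX: "A \<subseteq> X"
  shows "internal_to X p (zonotope A) \<longleftrightarrow>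
     (\<forall>y\<in>X. (y \<in> A \<longrightarrow> 0 < representation X p y \<and> representation X p y < 1)
            \<and> (y \<notin> A \<longrightarrow> representation X p y = 0))" (is "?L \<longleftrightarrow> ?R")
proof
  assume H: ?L
  then have pA: "p \<in> zonotope A" and min: "\<And>G. G face_of zonotope X \<Longrightarrow> p \<in> G \<Longrightarrow> zonotope A \<subseteq> G"
    unfolding internal_to_def by auto
  have pc: "\<forall>y\<in>X. (y \<in> A \<longrightarrow> 0 \<le> representation X p y \<and> representation X p y \<le> 1)
            \<and> (y \<notin> A \<longrightarrow> representation X p y = 0)"
    using pA zon_char[OF AX] by auto
  have "representation X p y \<noteq> 0 \<and> representation X p y \<noteq> 1" if y: "y \<in> A" for y
  proof
    have yX: "y \<in> X" using y AX by auto
    have ry: "representation X y = (\<lambda>v. if v = y then 1 else 0)"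
      using representation_basis[OF indX yX] .
    show "representation X p y \<noteq> 0"
    proof
      assume p0: "representation X p y = 0"
      have AyX: "A - {y} \<subseteq> X" using AX by auto
      have "p \<in> zonotope (A - {y})" using pc p0 by (auto simp: zon_char[OF AyX])
      then have "zonotope A \<subseteq> zonotope (A - {y})" using min zon_face[OF AyX] by blast
      moreover have "y \<in> zonotope A" using y by (auto simp: zon_char[OF AX] ry)
      moreover have "y \<notin> zonotope (A - {y})" using yX by (auto simp: zon_char[OF AyX] ry)
      ultimately show False by blast
    qed
    show "representation X p y \<noteq> 1"
    proof
      assume p1: "representation X p y = 1"
      let ?G = "{v \<in> zonotope X. \<forall>z\<in>{y}. representation X v z = (\<lambda>_. 1) z}"
      have "?G face_of zonotope X" using yX by (intro face_coord) auto
      moreover have "p \<in> ?G" using p1 pA zon_sub[OF AX] by auto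
      ultimately have "zonotope A \<subseteq> ?G" using min by blast
      moreover have "0 \<in> zonotope A" by (auto simp: zon_char[OF AX] rep_zero)
      ultimately show False by (auto simp: rep_zero)
    qed
  qed
  then show ?R using pc by force
next
  assume R: ?R
  have pA: "p \<in> zonotope A" using R by (auto simp: zon_char[OF AX])
  have "zonotope A \<subseteq> G" if G: "G face_of zonotope X" "p \<in> G" for G
  proof
    fix q assume qA: "q \<in> zonotope A"
    show "q \<in> G"
    proof (cases "q = p")
      case True then show ?thesis using G by simp
    next
      case False
      have finA: "finite A" using finite_subset[OF AX finX] .
      define d where "d = Min (insert 1 ((\<lambda>z. min (representation X p z) (1 - representation X p z)) ` A))"
      have d0: "0 < d" unfolding d_def using finA R AX by (subst Min_gr_iff) auto
      have d1: "d \<le> representation X p z" "d \<le> 1 - representation X p z" if "z \<in> A" for z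
      proof -
        have "d \<le> min (representation X p z) (1 - representation X p z)"
          unfolding d_def using finA that by (intro Min.coboundedI) auto
        then show "d \<le> representation X p z" "d \<le> 1 - representation X p z" by auto
      qed
      define r where "r = p + d *\<^sub>R (p - q)"
      have rr: "representation X r z = representation X p z + d * (representation X p z - representation X q z)" for z
        by (simp add: r_def rep_add rep_scale rep_diff)
      have qc: "\<forall>y\<in>X. (y \<in> A \<longrightarrow> 0 \<le> representation X q y \<and> representation X q y \<le> 1)
            \<and> (y \<notin> A \<longrightarrow> representation X q y = 0)"
        using qA zon_char[OF AX] by auto
      have "r \<in> zonotope A"
        unfolding zon_char[OF AX]
      proof (intro CollectI ballI conjI impI)
        fix z assume z: "z \<in> X" "z \<in> A"
        have "0 \<le> d * representation X q z" "d * representation X q z \<le> d"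
          using qc z d0 by (auto simp: mult_left_le)
        moreover have "0 \<le> d * representation X p z" "d * representation X p z \<le> d"
          using R z d0 by (auto simp: mult_left_le less_imp_le)
        ultimately show "0 \<le> representation X r z" "representation X r z \<le> 1"
          using d1[OF z(2)] unfolding rr right_diff_distrib by linarith+
      next
        fix z assume z: "z \<in> X" "z \<notin> A"
        then show "representation X r z = 0" using R qc rr by auto
      qed
      then have rX: "r \<in> zonotope X" using zon_sub[OF AX] by auto
      have qX: "q \<in> zonotope X" using qA zon_sub[OF AX] by auto
      have "q \<noteq> r"
      proof
        assume "q = r"
        have "representation X q z = representation X p z" for z
        proof -
          have e: "representation X q z = representation X p z + d * (representation X p z - representation X q z)"
            using rr[of z] \<open>q = r\<close> by simp
          have "(1 + d) * (representation X q z - representation X p z) = 0"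
            using e by (simp add: algebra_simps)
          then show ?thesis using d0 by simp
        qed
        then have "q = p" by (intro rep_eqI) auto
        then show False using False by simp
      qed
      moreover have "p = (1 - 1/(1+d)) *\<^sub>R q + (1/(1+d)) *\<^sub>R r"
      proof (rule rep_eqI)
        fix z
        show "representation X p z = representation X ((1 - 1/(1+d)) *\<^sub>R q + (1/(1+d)) *\<^sub>R r) z"
          using seg_alg[of "1/(1+d)" d] d0 by (simp add: rep_add rep_scale rr)
      qed
      ultimately have "p \<in> open_segment q r" using d0 unfolding in_segment
        by (intro conjI exI[of _ "1/(1+d)"]) auto
      then show ?thesis using face_ofD[OF G(1) _ qX rX G(2)] by blast
    qed
  qed
  then show ?L unfolding internal_to_def using pA zon_face[OF AX] by blast
qed

end

lemma lat_char:
  fixes B :: "('a::euclidean_space) set"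
  assumes indB: "independent B" and spB: "span B = UNIV"
  shows "zspan B = {v. \<forall>b\<in>B. representation B v b \<in> \<int>}"
proof
  show "zspan B \<subseteq> {v. \<forall>b\<in>B. representation B v b \<in> \<int>}"
    unfolding zspan_def
    by (auto simp: rep_comb[OF indB spB] simp del: of_int_def)
next
  show "{v. \<forall>b\<in>B. representation B v b \<in> \<int>} \<subseteq> zspan B"
  proof
    fix v assume v: "v \<in> {v. \<forall>b\<in>B. representation B v b \<in> \<int>}"
    have "v = (\<Sum>b\<in>B. representation B v b *\<^sub>R b)" using rep_sumX[OF indB spB] by simp
    also have "\<dots> = (\<Sum>b\<in>B. of_int \<lfloor>representation B v b\<rfloor> *\<^sub>R b)"
      using v by (intro sum.cong refl) (auto elim!: Ints_cases)
    finally show "v \<in> zspan B" unfolding zspan_def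
      by (intro CollectI exI[of _ "\<lambda>b. \<lfloor>representation B v b\<rfloor>"]) simp
  qed
qed


context
  fixes X B L :: "('a::euclidean_space) set"
  assumes indX: "independent X" and spX: "span X = UNIV"
    and indB: "independent B" and spB: "span B = UNIV"
    and LB: "L = zspan B" and XL: "X \<subseteq> L"
begin

lemma inL: "v \<in> L \<longleftrightarrow> (\<forall>b\<in>B. representation B v b \<in> \<int>)"
  using lat_char[OF indB spB] LB by auto

lemma L_diff: "u \<in> L \<Longrightarrow> v \<in> L \<Longrightarrow> u - v \<in> L"
  by (auto simp: inL rep_diff[OF indB spB])

lemma repB_sum: "representation B (\<Sum>a\<in>A. f a *\<^sub>R a) b = (\<Sum>a\<in>A. f a * representation B a b)"
  by (subst representation_sum[OF indB]) (auto simp: spB rep_scale[OF indB spB])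

lemma zspan_sub: "A \<subseteq> X \<Longrightarrow> zspan A \<subseteq> L"
proof
  fix w assume A: "A \<subseteq> X" and w: "w \<in> zspan A"
  then obtain c where c: "w = (\<Sum>a\<in>A. of_int (c a) *\<^sub>R a)" unfolding zspan_def by blast
  have "representation B w b \<in> \<int>" if "b \<in> B" for b
  proof -
    have "\<forall>a\<in>A. representation B a b \<in> \<int>" using A XL that inL by blast
    then show ?thesis unfolding c repB_sum by (intro Ints_sum Ints_mult) auto
  qed
  then show "w \<in> L" by (simp add: inL)
qed

lemma finite_LZ: "finite (L \<inter> zonotope X)"
proof -
  have finB: "finite B" using indB finiteI_independent by blast
  have finX: "finite X" using indX finiteI_independent by blast
  define K where "K = (\<Sum>b\<in>B. \<Sum>y\<in>X. \<bar>representation B y b\<bar>)"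
  define N where "N = \<lceil>K\<rceil>"
  have sub: "L \<inter> zonotope X \<subseteq> (\<lambda>c. \<Sum>b\<in>B. of_int (c b) *\<^sub>R b) ` (PiE B (\<lambda>_. {-N..N}))"
  proof
    fix v assume v: "v \<in> L \<inter> zonotope X"
    have bnd: "\<bar>representation B v b\<bar> \<le> K" if b: "b \<in> B" for b
    proof -
      have "representation B v b = representation B (\<Sum>y\<in>X. representation X v y *\<^sub>R y) b"
        using rep_sumX[OF indX spX] by simp
      also have "\<dots> = (\<Sum>y\<in>X. representation X v y * representation B y b)" by (rule repB_sum)
      finally have "\<bar>representation B v b\<bar> \<le> (\<Sum>y\<in>X. \<bar>representation X v y * representation B y b\<bar>)"
        by (simp add: sum_abs)
      also have "\<dots> \<le> (\<Sum>y\<in>X. \<bar>representation B y b\<bar>)"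
      proof (rule sum_mono)
        fix y assume "y \<in> X"
        then have "0 \<le> representation X v y" "representation X v y \<le> 1"
          using v zonX[OF indX spX] by auto
        then show "\<bar>representation X v y * representation B y b\<bar> \<le> \<bar>representation B y b\<bar>"
          by (simp add: abs_mult mult_left_le_one_le)
      qed
      also have "\<dots> \<le> K" unfolding K_def using b finB
        by (intro member_le_sum) auto
      finally show ?thesis .
    qed
    define c where "c = restrict (\<lambda>b. \<lfloor>representation B v b\<rfloor>) B"
    have ci: "of_int (c b) = representation B v b" if "b \<in> B" for b
      using v that inL by (auto simp: c_def elim!: Ints_cases)
    have "c \<in> PiE B (\<lambda>_. {-N..N})"
    proof -
      have "c b \<in> {-N..N}" if b: "b \<in> B" for b
      proof -
        have "\<bar>real_of_int (c b)\<bar> \<le> K" using ci[OF b] bnd[OF b] by simp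
        then have "\<bar>real_of_int (c b)\<bar> \<le> real_of_int N" unfolding N_def
          using le_of_int_ceiling order_trans by blast
        then show ?thesis by (simp add: abs_le_iff)
      qed
      then show ?thesis by (auto simp: c_def)
    qed
    moreover have "v = (\<Sum>b\<in>B. of_int (c b) *\<^sub>R b)"
      using rep_sumX[OF indB spB, of v] ci by (metis (no_types, lifting) sum.cong)
    ultimately show "v \<in> (\<lambda>c. \<Sum>b\<in>B. of_int (c b) *\<^sub>R b) ` (PiE B (\<lambda>_. {-N..N}))" by blast
  qed
  show ?thesis by (rule finite_subset[OF sub]) (intro finite_imageI finite_PiE finB; simp)
qed


lemma Ibox_eq: "A \<subseteq> X \<Longrightarrow> {p \<in> L \<inter> zonotope X. internal_to X p (zonotope A)} =
   {p \<in> L. \<forall>y\<in>X. (y \<in> A \<longrightarrow> 0 < representation X p y \<and> representation X p y < 1)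
            \<and> (y \<notin> A \<longrightarrow> representation X p y = 0)}"
  by (auto simp: internal_char[OF indX spX] zonX[OF indX spX])

lemma h_eq: assumes "A \<subseteq> X" shows "hcount L X A = card {p \<in> L. \<forall>y\<in>X. (y \<in> A \<longrightarrow> 0 < representation X p y \<and> representation X p y < 1)
            \<and> (y \<notin> A \<longrightarrow> representation X p y = 0)}"
  unfolding hcount_def Ibox_eq[OF assms] ..

lemma Pbox_finite: "finite {p \<in> L. \<forall>y\<in>X. (y \<in> A \<longrightarrow> 0 \<le> representation X p y \<and> representation X p y < 1)
            \<and> (y \<notin> A \<longrightarrow> representation X p y = 0)}"
  by (rule finite_subset[OF _ finite_LZ]) (auto simp: zonX[OF indX spX] dest!: bnd_lem)

lemma Pbox_sum: "A \<subseteq> X \<Longrightarrow> card {p \<in> L. \<forall>y\<in>X. (y \<in> A \<longrightarrow> 0 \<le> representation X p y \<and> representation X p y < 1)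
            \<and> (y \<notin> A \<longrightarrow> representation X p y = 0)} = (\<Sum>C\<in>Pow A. hcount L X C)"
proof -
  assume AX: "A \<subseteq> X"
  define I where "I C = {p \<in> L. \<forall>y\<in>X. (y \<in> C \<longrightarrow> 0 < representation X p y \<and> representation X p y < 1)
            \<and> (y \<notin> C \<longrightarrow> representation X p y = 0)}" for C
  have finA: "finite A" using finite_subset[OF AX] indX finiteI_independent by blast
  have eq: "{p \<in> L. \<forall>y\<in>X. (y \<in> A \<longrightarrow> 0 \<le> representation X p y \<and> representation X p y < 1)
            \<and> (y \<notin> A \<longrightarrow> representation X p y = 0)} = (\<Union>C\<in>Pow A. I C)" (is "?P = _")
  proof
    show "?P \<subseteq> (\<Union>C\<in>Pow A. I C)"
    proof
      fix p assume p: "p \<in> ?P"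
      then have pL: "p \<in> L" and pH: "\<forall>y\<in>X. (y \<in> A \<longrightarrow> 0 \<le> representation X p y \<and> representation X p y < 1)
            \<and> (y \<notin> A \<longrightarrow> representation X p y = 0)" by blast+
      have "p \<in> I {y\<in>A. representation X p y \<noteq> 0}" unfolding I_def
        by (rule CollectI, rule conjI[OF pL supp2[OF pH]])
      moreover have "{y\<in>A. representation X p y \<noteq> 0} \<in> Pow A" by auto
      ultimately show "p \<in> (\<Union>C\<in>Pow A. I C)" by (rule UN_I[rotated])
    qed
    show "(\<Union>C\<in>Pow A. I C) \<subseteq> ?P"
    proof
      fix p assume "p \<in> (\<Union>C\<in>Pow A. I C)"
      then obtain C where C: "C \<subseteq> A" "p \<in> I C" by auto
      then have pL: "p \<in> L" and pH: "\<forall>y\<in>X. (y \<in> C \<longrightarrow> 0 < representation X p y \<and> representation X p y < 1)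
            \<and> (y \<notin> C \<longrightarrow> representation X p y = 0)" unfolding I_def by auto
      show "p \<in> ?P" by (rule CollectI, rule conjI[OF pL supp3[OF C(1) pH]])
    qed
  qed
  have "card ?P = (\<Sum>C\<in>Pow A. card (I C))"
    unfolding eq
  proof (rule card_UN_disjoint)
    show "finite (Pow A)" using finA by simp
    show "\<forall>C\<in>Pow A. finite (I C)"
    proof
      fix C assume "C \<in> Pow A"
      show "finite (I C)" unfolding I_def
        by (rule finite_subset[OF _ finite_LZ]) (auto simp: zonX[OF indX spX] dest!: bnd_lem2)
    qed
    show "\<forall>C\<in>Pow A. \<forall>D\<in>Pow A. C \<noteq> D \<longrightarrow> I C \<inter> I D = {}"
    proof (intro ballI impI)
      fix C D assume C: "C \<in> Pow A" and D: "D \<in> Pow A" and ne: "C \<noteq> D"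
      show "I C \<inter> I D = {}"
      proof (rule ccontr)
        assume "I C \<inter> I D \<noteq> {}"
        then obtain p where "p \<in> I C" "p \<in> I D" by blast
        then have pc: "\<forall>y\<in>X. (y \<in> C \<longleftrightarrow> representation X p y \<noteq> 0)"
              "\<forall>y\<in>X. (y \<in> D \<longleftrightarrow> representation X p y \<noteq> 0)"
          unfolding I_def by (auto dest!: supp_lem)
        have "C = D" using C D AX pc by blast
        then show False using ne by simp
      qed
    qed
  qed
  also have "\<dots> = (\<Sum>C\<in>Pow A. hcount L X C)"
    using AX by (intro sum.cong refl) (auto simp: h_eq I_def)
  finally show ?thesis .
qed


lemma mult_eq:
  assumes AX: "A \<subseteq> X"
  shows "mult L A = card {p \<in> L. \<forall>y\<in>X. (y \<in> A \<longrightarrow> 0 \<le> representation X p y \<and> representation X p y < 1)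
            \<and> (y \<notin> A \<longrightarrow> representation X p y = 0)}" (is "_ = card ?P")
proof -
  let ?f = "\<lambda>v. (\<lambda>w. v + w) ` zspan A"
  have finA: "finite A" using finite_subset[OF AX] indX finiteI_independent by blast
  have Pc: "representation X p y = 0" if "p \<in> ?P" "y \<in> X" "y \<notin> A" for p y
    using that by auto
  have inj: "inj_on ?f ?P"
  proof
    fix p q assume p: "p \<in> ?P" and q: "q \<in> ?P" and e: "?f p = ?f q"
    have "p \<in> ?f p" using zspan_zero by force
    then have "p \<in> ?f q" using e by simp
    then obtain z where z: "z \<in> zspan A" "p = q + z" by blast
    then obtain c where c: "z = (\<Sum>a\<in>A. of_int (c a) *\<^sub>R a)" unfolding zspan_def by blast
    show "p = q"
    proof (rule rep_eqI[OF indX spX])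
      fix y assume y: "y \<in> X"
      show "representation X p y = representation X q y"
      proof (cases "y \<in> A")
        case True
        have "representation X p y = representation X q y + of_int (c y)"
          using True by (simp add: z(2) c rep_add[OF indX spX] rep_comb[OF indX spX AX])
        moreover have "0 \<le> representation X p y" "representation X p y < 1"
          "0 \<le> representation X q y" "representation X q y < 1"
          using p q y True by auto
        ultimately have "\<bar>real_of_int (c y)\<bar> < 1" by linarith
        then have "c y = 0" by (rule int_small)
        then show ?thesis using True by (simp add: z(2) c rep_add[OF indX spX] rep_comb[OF indX spX AX])
      next
        case False
        then show ?thesis using Pc[OF p y] Pc[OF q y] by simp
      qed
    qed
  qed
  have img: "?f ` ?P = ?f ` (L \<inter> span A)"
  proof
    show "?f ` ?P \<subseteq> ?f ` (L \<inter> span A)"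
    proof (rule image_mono, rule subsetI)
      fix p assume p: "p \<in> ?P"
      then have "p \<in> span A" unfolding span_char[OF indX spX AX] by auto
      then show "p \<in> L \<inter> span A" using p by auto
    qed
    show "?f ` (L \<inter> span A) \<subseteq> ?f ` ?P"
    proof
      fix C assume "C \<in> ?f ` (L \<inter> span A)"
      then obtain v where v: "v \<in> L" "v \<in> span A" and C: "C = ?f v" by blast
      have v0: "representation X v y = 0" if "y \<in> X" "y \<notin> A" for y
        using v(2) that unfolding span_char[OF indX spX AX] by auto
      define w where "w = (\<Sum>a\<in>A. of_int \<lfloor>representation X v a\<rfloor> *\<^sub>R a)"
      have w: "w \<in> zspan A" unfolding w_def zspan_def
        by (intro CollectI exI[of _ "\<lambda>a. \<lfloor>representation X v a\<rfloor>"]) simp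
      define p where "p = v - w"
      have pL: "p \<in> L" unfolding p_def using L_diff[OF v(1)] zspan_sub[OF AX] w by blast
      have rp: "representation X p y = representation X v y - (if y \<in> A then of_int \<lfloor>representation X v y\<rfloor> else 0)" for y
        by (simp add: p_def w_def rep_diff[OF indX spX] rep_comb[OF indX spX AX])
      have "p \<in> ?P"
      proof (rule CollectI, rule conjI[OF pL], intro ballI conjI impI)
        fix y assume "y \<in> X" "y \<in> A"
        then show "0 \<le> representation X p y" "representation X p y < 1"
          unfolding rp by simp_all linarith+
      next
        fix y assume "y \<in> X" "y \<notin> A"
        then show "representation X p y = 0" unfolding rp using v0 by simp
      qed
      moreover have "C = ?f p" unfolding C p_def using coset_shift[OF w, of v] by simp
      ultimately show "C \<in> ?f ` ?P" by blast
    qed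
  qed
  have "bij_betw ?f ?P (?f ` (L \<inter> span A))"
    unfolding bij_betw_def using inj img by blast
  then show ?thesis unfolding mult_def by (simp add: bij_betw_same_card)
qed

end

lemma pow_sum:
  fixes a :: real
  assumes "finite S"
  shows "(\<Sum>D\<in>Pow S. a ^ (card S - card D)) = (a + 1) ^ card S"
  using assms
proof (induction S rule: finite_induct)
  case empty
  then show ?case by simp
next
  case (insert s S)
  have fP: "finite (Pow S)" using insert by simp
  have disj: "Pow S \<inter> insert s ` Pow S = {}" using insert by auto
  have inj: "inj_on (insert s) (Pow S)"
    unfolding inj_on_def using insert by (metis PowD insert_absorb insert_ident subsetD)
  have cS: "\<And>D. D \<in> Pow S \<Longrightarrow> card D \<le> card S" using insert by (auto intro: card_mono)
  have "(\<Sum>D\<in>Pow (insert s S). a ^ (card (insert s S) - card D))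
      = (\<Sum>D\<in>Pow S. a ^ (card S + 1 - card D)) + (\<Sum>D\<in>insert s ` Pow S. a ^ (card S + 1 - card D))"
    unfolding Pow_insert using insert fP disj by (simp add: sum.union_disjoint)
  also have "(\<Sum>D\<in>insert s ` Pow S. a ^ (card S + 1 - card D)) = (\<Sum>D\<in>Pow S. a ^ (card S + 1 - card (insert s D)))"
    by (rule sum.reindex[OF inj, unfolded comp_def])
  also have "\<dots> = (\<Sum>D\<in>Pow S. a ^ (card S - card D))"
  proof (rule sum.cong[OF refl])
    fix D assume D: "D \<in> Pow S"
    then have "finite D" "s \<notin> D" using insert finite_subset by auto
    then show "a ^ (card S + 1 - card (insert s D)) = a ^ (card S - card D)" by simp
  qed
  also have "(\<Sum>D\<in>Pow S. a ^ (card S + 1 - card D)) = a * (\<Sum>D\<in>Pow S. a ^ (card S - card D))"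
    unfolding sum_distrib_left
  proof (rule sum.cong[OF refl])
    fix D assume "D \<in> Pow S"
    then have "card S + 1 - card D = Suc (card S - card D)" using cS by (simp add: Suc_diff_le)
    then show "a ^ (card S + 1 - card D) = a * a ^ (card S - card D)" by simp
  qed
  finally show ?case using insert by (simp add: algebra_simps)
qed

lemma up_sum:
  fixes a :: real
  assumes fX: "finite X" and CX: "C \<subseteq> X"
  shows "(\<Sum>A\<in>{A. A \<in> Pow X \<and> C \<subseteq> A}. a ^ (card X - card A)) = (a + 1) ^ (card X - card C)"
proof -
  have img: "{A. A \<in> Pow X \<and> C \<subseteq> A} = (\<lambda>D. C \<union> D) ` Pow (X - C)"
  proof
    show "{A. A \<in> Pow X \<and> C \<subseteq> A} \<subseteq> (\<lambda>D. C \<union> D) ` Pow (X - C)"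
    proof
      fix A assume A: "A \<in> {A. A \<in> Pow X \<and> C \<subseteq> A}"
      then have "A = C \<union> (A - C)" "A - C \<in> Pow (X - C)" by auto
      then show "A \<in> (\<lambda>D. C \<union> D) ` Pow (X - C)" by blast
    qed
    show "(\<lambda>D. C \<union> D) ` Pow (X - C) \<subseteq> {A. A \<in> Pow X \<and> C \<subseteq> A}" using CX by auto
  qed
  have inj: "inj_on (\<lambda>D. C \<union> D) (Pow (X - C))"
    unfolding inj_on_def by blast
  have fC: "finite C" using finite_subset[OF CX fX] .
  have "(\<Sum>A\<in>{A. A \<in> Pow X \<and> C \<subseteq> A}. a ^ (card X - card A)) = (\<Sum>D\<in>Pow (X - C). a ^ (card X - card (C \<union> D)))"
    unfolding img by (rule sum.reindex[OF inj, unfolded comp_def])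
  also have "\<dots> = (\<Sum>D\<in>Pow (X - C). a ^ (card (X - C) - card D))"
  proof (rule sum.cong[OF refl])
    fix D assume D: "D \<in> Pow (X - C)"
    then have fD: "finite D" using fX finite_subset by blast
    have "card (C \<union> D) = card C + card D" using D fC fD by (intro card_Un_disjoint) auto
    moreover have "card (X - C) = card X - card C" using card_Diff_subset[OF fC CX] .
    ultimately show "a ^ (card X - card (C \<union> D)) = a ^ (card (X - C) - card D)" by simp
  qed
  also have "\<dots> = (a + 1) ^ card (X - C)" using fX by (intro pow_sum) auto
  also have "card (X - C) = card X - card C" using card_Diff_subset[OF fC CX] .
  finally show ?thesis .
qed

lemma comb_main:
  fixes h :: "'a set \<Rightarrow> nat" and x :: real
  assumes fX: "finite X" and n: "card X = n"
  shows "(\<Sum>A\<in>Pow X. real (\<Sum>C\<in>Pow A. h C) * (x - 1) ^ (n - card A))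
       = (\<Sum>k = 0..n. real (\<Sum>A\<in>{A. A \<subseteq> X \<and> card A = n - k}. h A) * x ^ k)"
proof -
  have "(\<Sum>A\<in>Pow X. real (\<Sum>C\<in>Pow A. h C) * (x - 1) ^ (n - card A))
      = (\<Sum>A\<in>Pow X. \<Sum>C\<in>{C. C \<in> Pow X \<and> C \<subseteq> A}. real (h C) * (x - 1) ^ (n - card A))"
  proof (rule sum.cong[OF refl])
    fix A assume "A \<in> Pow X"
    then have "{C. C \<in> Pow X \<and> C \<subseteq> A} = Pow A" by auto
    then show "real (\<Sum>C\<in>Pow A. h C) * (x - 1) ^ (n - card A) = (\<Sum>C\<in>{C. C \<in> Pow X \<and> C \<subseteq> A}. real (h C) * (x - 1) ^ (n - card A))"
      by (simp add: sum_distrib_right)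
  qed
  also have "\<dots> = (\<Sum>C\<in>Pow X. \<Sum>A\<in>{A. A \<in> Pow X \<and> C \<subseteq> A}. real (h C) * (x - 1) ^ (n - card A))"
    using fX by (intro sum.swap_restrict) auto
  also have "\<dots> = (\<Sum>C\<in>Pow X. real (h C) * x ^ (n - card C))"
  proof (rule sum.cong[OF refl])
    fix C assume C: "C \<in> Pow X"
    have "(\<Sum>A\<in>{A. A \<in> Pow X \<and> C \<subseteq> A}. real (h C) * (x - 1) ^ (n - card A))
        = real (h C) * (\<Sum>A\<in>{A. A \<in> Pow X \<and> C \<subseteq> A}. (x - 1) ^ (card X - card A))"
      by (simp add: sum_distrib_left n)
    also have "\<dots> = real (h C) * x ^ (n - card C)" using up_sum[OF fX, of C "x - 1"] C n by simp
    finally show "(\<Sum>A\<in>{A. A \<in> Pow X \<and> C \<subseteq> A}. real (h C) * (x - 1) ^ (n - card A)) = real (h C) * x ^ (n - card C)" .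
  qed
  also have "\<dots> = (\<Sum>k = 0..n. \<Sum>C\<in>{C. C \<in> Pow X \<and> n - card C = k}. real (h C) * x ^ (n - card C))"
    using fX by (intro sum.group[symmetric]) auto
  also have "\<dots> = (\<Sum>k = 0..n. real (\<Sum>A\<in>{A. A \<subseteq> X \<and> card A = n - k}. h A) * x ^ k)"
  proof (rule sum.cong[OF refl])
    fix k assume k: "k \<in> {0..n}"
    have eq: "{C. C \<in> Pow X \<and> n - card C = k} = {A. A \<subseteq> X \<and> card A = n - k}"
    proof -
      have "card C \<le> n" if "C \<subseteq> X" for C using card_mono[OF fX that] n by simp
      then show ?thesis using k by auto
    qed
    show "(\<Sum>C\<in>{C. C \<in> Pow X \<and> n - card C = k}. real (h C) * x ^ (n - card C)) = real (\<Sum>A\<in>{A. A \<subseteq> X \<and> card A = n - k}. h A) * x ^ k"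
    proof -
      have "(\<Sum>C\<in>{C. C \<in> Pow X \<and> n - card C = k}. real (h C) * x ^ (n - card C))
          = (\<Sum>C\<in>{C. C \<in> Pow X \<and> n - card C = k}. real (h C) * x ^ k)"
        by (rule sum.cong) auto
      then show ?thesis unfolding eq by (simp add: sum_distrib_right)
    qed
  qed
  finally show ?thesis .
qed


theorem lemma4p4:
  fixes L :: "(real^'n) set" and X :: "(real^'n) set" and x :: real
  assumes "full_lattice L"
    and "X \<subseteq> L" and "independent X" and "span X = UNIV"
  shows "arith_tutte L X x 1 =
    (\<Sum>k = 0..CARD('n). real (\<Sum>A\<in>{A. A \<subseteq> X \<and> card A = CARD('n) - k}. hcount L X A) * x ^ k)"
proof -
  obtain B where B: "independent B" "span B = UNIV" "L = zspan B"
    using assms(1) unfolding full_lattice_def by blast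
  have fX: "finite X" using assms(3) finiteI_independent by blast
  have dX: "dim X = CARD('n)"
  proof -
    have "dim X = dim (span X)" by (simp add: dim_span)
    also have "\<dots> = CARD('n)" using assms(4) by (simp add: dim_UNIV)
    finally show ?thesis .
  qed
  have cX: "card X = CARD('n)" using dX dim_eq_card_independent[OF assms(3)] by simp
  have "arith_tutte L X x 1 = (\<Sum>A\<in>Pow X. real (\<Sum>C\<in>Pow A. hcount L X C) * (x - 1) ^ (CARD('n) - card A))"
    unfolding arith_tutte_def
  proof (rule sum.cong[OF refl])
    fix A assume A: "A \<in> Pow X"
    then have AX: "A \<subseteq> X" by auto
    have dA: "dim A = card A" using independent_mono[OF assms(3) AX] dim_eq_card_independent by blast
    have "mult L A = (\<Sum>C\<in>Pow A. hcount L X C)"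
      using mult_eq[OF assms(3,4) B(1,2,3) assms(2) AX] Pbox_sum[OF assms(3,4) B(1,2,3) assms(2) AX] by simp
    then show "real (mult L A) * (x - 1) ^ (dim X - dim A) * (1 - 1) ^ (card A - dim A)
        = real (\<Sum>C\<in>Pow A. hcount L X C) * (x - 1) ^ (CARD('n) - card A)"
      using dX dA by simp
  qed
  also have "\<dots> = (\<Sum>k = 0..CARD('n). real (\<Sum>A\<in>{A. A \<subseteq> X \<and> card A = CARD('n) - k}. hcount L X A) * x ^ k)"
    by (rule comb_main[OF fX cX])
  finally show ?thesis .
qed

end
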